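(* Let $\mathcal A$ be a finite alphabet, and for each $n\ge 0$ let $\sigma_n:\mathcal A^*\to\mathcal A^*$ be a monoid morphism whose incidence matrix $M(\sigma_n)$ is invertible. Suppose the directive sequence $(\sigma_n)_{n\ge0}$ is everywhere growing, and let $X$ be the subshift it generates. Then every invariant measure $\mu$ on $X$ is determined by the values $\mu([a])$, $a\in\mathcal A$; i.e. two invariant measures on $X$ which agree on all letter cylinders $[a]$, $a\in\mathcal A$, are equal.
   Context: For a finite alphabet $\mathcal A$, $\mathcal A^{\mathbb Z}$ carries the product topology and the shift map $T$. A subshift is a closed $T$-invariant ($T(X)=X$) subset. An invariant measure on $X$ is a finite $T$-invariant Borel measure on $\mathcal A^{\mathbb Z}$ with support in $X$. For $w=y_1\cdots y_n\in\mathcal A^*$, the cylinder $[w]$ is $\{x\in\mathcal A^{\mathbb Z}: x_i=y_i,\ i=1,\dots,n\}$. For a monoid morphism $\sigma:\mathcal A^*\to\mathcal A'^*$ the incidence matrix is $M(\sigma)=(|\sigma(a_j)|_{a'_i})_{i,j}$, where $|w|_x$ is the number of occurrences of the letter $x$ in $w$. The subshift generated by the directive sequence $(\sigma_n)_{n\ge0}$ consists of all $x\in\mathcal A^{\mathbb Z}$ such that every finite factor of $x$ is a factor of $\sigma_0\circ\cdots\circ\sigma_{n-1}(a)$ for some $n\ge0$ and $a\in\mathcal A$. The sequence is everywhere growing if $\min_{a\in\mathcal A}|\sigma_0\circ\cdots\circ\sigma_{n-1}(a)|\to\infty$ as $n\to\infty$. *)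

theory Defs
  imports "HOL-Analysis.Analysis" "HOL-Library.Sublist"
begin

definition shift :: "(int \<Rightarrow> 'a) \<Rightarrow> (int \<Rightarrow> 'a)" where
  "shift x = (\<lambda>i. x (i + 1))"

definition fullshift_top :: "(int \<Rightarrow> 'a) topology" where
  "fullshift_top = product_topology (\<lambda>_. discrete_topology UNIV) UNIV"

definition fullshift_borel :: "(int \<Rightarrow> 'a) measure" where
  "fullshift_borel = sigma (topspace fullshift_top) {S. openin fullshift_top S}"

definition cylinder :: "'a list \<Rightarrow> (int \<Rightarrow> 'a) set" where
  "cylinder w = {x. \<forall>i < length w. x (int i + 1) = w ! i}"

definition morph :: "('a \<Rightarrow> 'b list) \<Rightarrow> 'a list \<Rightarrow> 'b list" where
  "morph s w = concat (map s w)"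

text \<open>comp_dir sig n = sigma_0 o ... o sigma_(n-1) (as a map on words).\<close>
fun comp_dir :: "(nat \<Rightarrow> 'a \<Rightarrow> 'a list) \<Rightarrow> nat \<Rightarrow> 'a list \<Rightarrow> 'a list" where
  "comp_dir sig 0 w = w"
| "comp_dir sig (Suc n) w = comp_dir sig n (morph (sig n) w)"

definition incidence :: "('a::finite \<Rightarrow> 'a list) \<Rightarrow> real^'a^'a" where
  "incidence s = (\<chi> i j. real (count_list (s j) i))"

definition everywhere_growing :: "(nat \<Rightarrow> 'a::finite \<Rightarrow> 'a list) \<Rightarrow> bool" where
  "everywhere_growing sig \<longleftrightarrow>
     filterlim (\<lambda>n. Min (range (\<lambda>a. length (comp_dir sig n [a])))) at_top sequentially"

definition factor_at :: "(int \<Rightarrow> 'a) \<Rightarrow> int \<Rightarrow> nat \<Rightarrow> 'a list" where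
  "factor_at x i k = map (\<lambda>j. x (i + int j)) [0..<k]"

definition generated_subshift :: "(nat \<Rightarrow> 'a \<Rightarrow> 'a list) \<Rightarrow> (int \<Rightarrow> 'a) set" where
  "generated_subshift sig =
     {x. \<forall>i k. \<exists>n a. sublist (factor_at x i k) (comp_dir sig n [a])}"

definition invariant_measure_on :: "(int \<Rightarrow> 'a) set \<Rightarrow> (int \<Rightarrow> 'a) measure \<Rightarrow> bool" where
  "invariant_measure_on X M \<longleftrightarrow>
     sets M = sets fullshift_borel \<and> finite_measure M \<and>
     (\<forall>A \<in> sets M. emeasure M (shift -` A \<inter> space M) = emeasure M A) \<and>
     emeasure M (space M - X) = 0"

end

theory Submission
  imports Defs
begin


fun occ :: "'a list \<Rightarrow> 'a list \<Rightarrow> nat" where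
  "occ w [] = 0"
| "occ w (x#xs) = (if prefix w (x#xs) then 1 else 0) + occ w xs"

lemma occ_sum: "occ w u = (\<Sum>i<length u. if prefix w (drop i u) then 1 else 0)"
  by (induction u) (simp_all add: sum.lessThan_Suc_shift del: sum.lessThan_Suc)

lemma occ_le_length: "occ w x \<le> length x"
  by (induction x) auto

lemma occ_append_ge: "occ w x + occ w y \<le> occ w (x @ y)"
proof (induction x)
  case Nil then show ?case by simp
next
  case (Cons a x)
  have "prefix w (a#x) \<Longrightarrow> prefix w (a#x@y)"
    by (metis append_Cons prefix_prefix)
  then show ?case using Cons by auto
qed

lemma occ_append_le: "occ w (x @ y) \<le> occ w x + occ w y + min (length x) (length w)"
proof (induction x)
  case Nil then show ?case by simp
next
  case (Cons a x)
  have *: "length (a#x) < length w" if h1: "prefix w ((a#x)@y)" and h2: "\<not> prefix w (a#x)"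
  proof -
    from h1 have "prefix w (a#x) \<or> (\<exists>us. w = (a#x) @ us \<and> prefix us y)"
      by (simp only: prefix_append)
    then obtain us where "w = (a#x) @ us" using h2 by blast
    moreover have "us \<noteq> []" using h2 calculation by auto
    ultimately show ?thesis by simp
  qed
  show ?case using Cons *
    by (cases "prefix w (a#x@y)"; cases "prefix w (a#x)"; auto)
qed

lemma occ_concat_ge: "sum_list (map (occ w) xs) \<le> occ w (concat xs)"
proof (induction xs)
  case (Cons x xs) then show ?case using occ_append_ge[of w x "concat xs"] by simp
qed simp

lemma occ_concat_le: "occ w (concat xs) \<le> sum_list (map (occ w) xs) + length w * length xs"
proof (induction xs)
  case (Cons x xs) then show ?case using occ_append_le[of w x "concat xs"] by simp
qed simp

lemma sum_list_count:
  fixes g :: "'a::finite \<Rightarrow> 'b::comm_semiring_1"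
  shows "sum_list (map g v) = (\<Sum>b\<in>UNIV. of_nat (count_list v b) * g b)"
proof (induction v)
  case Nil then show ?case by simp
next
  case (Cons x v)
  have "(\<Sum>b\<in>UNIV. of_nat (count_list (x#v) b) * g b)
      = (\<Sum>b\<in>UNIV. (if x = b then g b else 0) + of_nat (count_list v b) * g b)"
    by (rule sum.cong) (auto simp: algebra_simps)
  also have "\<dots> = g x + (\<Sum>b\<in>UNIV. of_nat (count_list v b) * g b)"
    by (simp add: sum.distrib)
  finally show ?case using Cons by simp
qed

lemma count_concat: "count_list (concat xs) a = sum_list (map (\<lambda>x. count_list x a) xs)"
  by (induction xs) auto

lemma morph_append: "morph s (x @ y) = morph s x @ morph s y"
  by (simp add: morph_def)

lemma morph_single[simp]: "morph s [b] = s b"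
  by (simp add: morph_def)

lemma comp_dir_append: "comp_dir sig n (x @ y) = comp_dir sig n x @ comp_dir sig n y"
  by (induction n arbitrary: x y) (simp_all add: morph_append)

lemma comp_dir_concat: "comp_dir sig n v = concat (map (\<lambda>b. comp_dir sig n [b]) v)"
proof (induction v)
  case Nil
  have "comp_dir sig n [] = []" by (induction n) (simp_all add: morph_def)
  then show ?case by simp
next
  case (Cons x v)
  then show ?case using comp_dir_append[of sig n "[x]" v] by simp
qed

lemma comp_dir_later: "n \<le> N \<Longrightarrow> \<exists>v. comp_dir sig N w = comp_dir sig n v"
proof (induction N arbitrary: w)
  case 0 then show ?case by auto
next
  case (Suc N)
  show ?case
  proof (cases "n = Suc N")
    case True then show ?thesis by blast
  next
    case False
    then have "n \<le> N" using Suc.prems by simp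
    then show ?thesis using Suc.IH by simp
  qed
qed

lemma prefix_concat_dec:
  assumes "\<And>b. length (\<tau> b) \<le> L" "prefix q (concat (map \<tau> v))"
  shows "\<exists>v' p. q = concat (map \<tau> v') @ p \<and> length p \<le> L"
  using assms(2)
proof (induction v arbitrary: q)
  case Nil then show ?case by (intro exI[of _ "[]"] exI[of _ q]) auto
next
  case (Cons b v)
  from Cons.prems have "prefix q (\<tau> b) \<or> (\<exists>us. q = \<tau> b @ us \<and> prefix us (concat (map \<tau> v)))"
    by (simp add: prefix_append)
  then show ?case
  proof
    assume "prefix q (\<tau> b)"
    then have "length q \<le> L" using assms(1)[of b] prefix_length_le le_trans by blast
    then show ?thesis by (intro exI[of _ "[]"] exI[of _ q]) auto
  next
    assume "\<exists>us. q = \<tau> b @ us \<and> prefix us (concat (map \<tau> v))"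
    then obtain us where us: "q = \<tau> b @ us" "prefix us (concat (map \<tau> v))" by blast
    from Cons.IH[OF us(2)] obtain v' p where "us = concat (map \<tau> v') @ p" "length p \<le> L" by blast
    then show ?thesis using us by (intro exI[of _ "b#v'"] exI[of _ p]) auto
  qed
qed

lemma sublist_concat_dec:
  assumes "\<And>b. length (\<tau> b) \<le> L" "sublist u (concat (map \<tau> v))"
  shows "\<exists>s v' p. u = s @ concat (map \<tau> v') @ p \<and> length s \<le> L \<and> length p \<le> L"
  using assms(2)
proof (induction v)
  case Nil then show ?case by (intro exI[of _ "[]"] exI[of _ "[]"] exI[of _ "[]"]) auto
next
  case (Cons b v)
  from Cons.prems have "sublist u (\<tau> b) \<or> sublist u (concat (map \<tau> v)) \<or>
     (\<exists>xs1 xs2. u = xs1 @ xs2 \<and> suffix xs1 (\<tau> b) \<and> prefix xs2 (concat (map \<tau> v)))"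
    by (simp add: sublist_append)
  then show ?case
  proof (elim disjE)
    assume "sublist u (\<tau> b)"
    then have "length u \<le> L" using assms(1)[of b] sublist_length_le le_trans by blast
    then show ?thesis by (intro exI[of _ u] exI[of _ "[]"]) auto
  next
    assume "sublist u (concat (map \<tau> v))" then show ?thesis using Cons.IH by blast
  next
    assume "\<exists>xs1 xs2. u = xs1 @ xs2 \<and> suffix xs1 (\<tau> b) \<and> prefix xs2 (concat (map \<tau> v))"
    then obtain xs1 xs2 where x: "u = xs1 @ xs2" "suffix xs1 (\<tau> b)" "prefix xs2 (concat (map \<tau> v))"
      by blast
    have "length xs1 \<le> L" using x(2) assms(1)[of b] suffix_length_le le_trans by blast
    moreover obtain v' p where "xs2 = concat (map \<tau> v') @ p" "length p \<le> L"
      using prefix_concat_dec[OF assms(1) x(3)] by blast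
    ultimately show ?thesis using x(1) by (intro exI[of _ xs1] exI[of _ v'] exI[of _ p]) auto
  qed
qed

lemma incidence_comp_Suc:
  fixes sig :: "nat \<Rightarrow> 'a::finite \<Rightarrow> 'a list"
  shows "incidence (\<lambda>b. comp_dir sig (Suc n) [b]) = incidence (\<lambda>b. comp_dir sig n [b]) ** incidence (sig n)"
proof -
  have "real (count_list (comp_dir sig (Suc n) [j]) i)
      = (\<Sum>c\<in>UNIV. real (count_list (comp_dir sig n [c]) i) * real (count_list (sig n j) c))" for i j
  proof -
    have "comp_dir sig (Suc n) [j] = concat (map (\<lambda>b. comp_dir sig n [b]) (sig n j))"
      using comp_dir_concat by simp
    then have "real (count_list (comp_dir sig (Suc n) [j]) i)
       = real (sum_list (map (\<lambda>b. count_list (comp_dir sig n [b]) i) (sig n j)))"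
      by (simp add: count_concat o_def)
    also have "\<dots> = (\<Sum>c\<in>UNIV. real (count_list (sig n j) c) * real (count_list (comp_dir sig n [c]) i))"
      by (simp add: sum_list_count of_nat_sum)
    finally show ?thesis by (simp add: mult.commute)
  qed
  then show ?thesis
    by (simp add: incidence_def matrix_matrix_mult_def vec_eq_iff)
qed

lemma incidence_comp_invertible:
  fixes sig :: "nat \<Rightarrow> 'a::finite \<Rightarrow> 'a list"
  assumes "\<And>n. invertible (incidence (sig n))"
  shows "invertible (incidence (\<lambda>b. comp_dir sig n [b]))"
proof (induction n)
  case 0
  have "incidence (\<lambda>b. comp_dir sig 0 [b]) = (mat 1 :: real^'a^'a)"
    by (simp add: incidence_def mat_def vec_eq_iff)
  then show ?case by (simp add: invertible_def)
next
  case (Suc n)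
  then show ?case using incidence_comp_Suc invertible_mult assms by metis
qed



lemma finite_W: "finite {u :: 'a::finite list. length u = m}"
  using finite_lists_length_eq[of "UNIV :: 'a set" m] by simp

lemma occ_single: "occ [a] u = count_list u a"
  by (induction u) auto

lemma length_concat_ge:
  assumes "\<And>b. L \<le> length (\<tau> b)"
  shows "length v * L \<le> length (concat (map \<tau> v))"
  using assms by (induction v) (auto simp: add_mono)

lemma inv_bound:
  fixes A :: "real^'n^'n"
  assumes "invertible A"
  shows "\<exists>B. \<forall>x. (\<forall>a. \<bar>(A *v x)$a\<bar> \<le> c) \<longrightarrow> (\<forall>b. \<bar>x$b\<bar> \<le> B)"
proof -
  obtain A' where A': "A' ** A = mat 1" using assms unfolding invertible_def by blast
  have "bounded_linear (\<lambda>y. A' *v y)"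
    by (simp add: linear_conv_bounded_linear)
  then obtain K where K: "K > 0" "\<And>y. norm (A' *v y) \<le> norm y * K"
    using bounded_linear.pos_bounded by blast
  show ?thesis
  proof (intro exI allI impI)
    fix x :: "real^'n" and b
    assume h: "\<forall>a. \<bar>(A *v x)$a\<bar> \<le> c"
    have "x = A' *v (A *v x)" by (simp add: matrix_vector_mul_assoc A')
    then have "\<bar>x$b\<bar> \<le> norm (A' *v (A *v x))" by (metis component_le_norm_cart)
    also have "\<dots> \<le> norm (A *v x) * K" using K by blast
    also have "norm (A *v x) \<le> (\<Sum>i\<in>UNIV. \<bar>(A *v x)$i\<bar>)" by (rule norm_le_l1_cart)
    also have "\<dots> \<le> (\<Sum>i\<in>(UNIV::'n set). c)" using h by (intro sum_mono) auto
    finally show "\<bar>x$b\<bar> \<le> real CARD('n) * c * K" using K by (simp add: mult_right_mono)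
  qed
qed

lemma archim_bound:
  fixes x c C0 :: real
  assumes "\<And>m. m \<ge> m0 \<Longrightarrow> (real m - l + 1) * x \<le> C0 + c * real m"
  shows "x \<le> c"
proof (rule ccontr)
  assume "\<not> x \<le> c"
  then have xc: "x - c > 0" by simp
  obtain m1 :: nat where m1: "real m1 > (C0 + \<bar>l\<bar> * \<bar>x\<bar> + \<bar>x\<bar>) / (x - c)"
    using reals_Archimedean2 by blast
  define m where "m = max m0 m1"
  have "real m \<ge> real m1" by (simp add: m_def)
  then have "real m * (x - c) > C0 + \<bar>l\<bar> * \<bar>x\<bar> + \<bar>x\<bar>"
    using m1 xc by (smt (verit, ccfv_SIG) mult_right_mono pos_divide_less_eq)
  moreover have "(real m - l + 1) * x \<le> C0 + c * real m" using assms by (simp add: m_def)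
  moreover have "- \<bar>l\<bar> * \<bar>x\<bar> \<le> - l * x" "- \<bar>x\<bar> \<le> x"
    by (auto simp: abs_mult[symmetric] abs_le_iff)
  ultimately show False by (simp add: algebra_simps)
qed



context
  fixes sig :: "nat \<Rightarrow> 'a::finite \<Rightarrow> 'a list" and P Q :: "'a list \<Rightarrow> real" and T :: real
  assumes inv: "\<And>n. invertible (incidence (sig n))"
    and P0: "\<And>u. P u \<ge> 0" and Q0: "\<And>u. Q u \<ge> 0"
    and Pocc: "\<And>m w. w \<noteq> [] \<Longrightarrow> length w \<le> m \<Longrightarrow>
       (\<Sum>u\<in>{u. length u = m}. P u * real (occ w u)) = (real m - real (length w) + 1) * P w"
    and Qocc: "\<And>m w. w \<noteq> [] \<Longrightarrow> length w \<le> m \<Longrightarrow>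
       (\<Sum>u\<in>{u. length u = m}. Q u * real (occ w u)) = (real m - real (length w) + 1) * Q w"
    and Ptot: "\<And>m. (\<Sum>u\<in>{u. length u = m}. P u) = T"
    and Qtot: "\<And>m. (\<Sum>u\<in>{u. length u = m}. Q u) = T"
    and PL: "\<And>u. P u \<noteq> 0 \<Longrightarrow> \<exists>N a. sublist u (comp_dir sig N [a])"
    and QL: "\<And>u. Q u \<noteq> 0 \<Longrightarrow> \<exists>N a. sublist u (comp_dir sig N [a])"
    and agree: "\<And>a. P [a] = Q [a]"
begin

lemma half:
  assumes wne: "w \<noteq> []" and Lpos: "Min (range (\<lambda>a. length (comp_dir sig n [a]))) > 0"
  shows "P w - Q w \<le> T * real (length w) / real (Min (range (\<lambda>a. length (comp_dir sig n [a]))))"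
proof -
  define \<tau> where "\<tau> b = comp_dir sig n [b]" for b
  have \<tau>_eq: "\<tau> = (\<lambda>b. comp_dir sig n [b])" by (simp add: fun_eq_iff \<tau>_def)
  define Lmin where "Lmin = Min (range (\<lambda>a. length (\<tau> a)))"
  define Lmax where "Lmax = Max (range (\<lambda>a. length (\<tau> a)))"
  define Mx where "Mx = incidence \<tau>"
  have Mxinv: "invertible Mx"
    unfolding Mx_def \<tau>_def using incidence_comp_invertible[of sig n] inv by blast
  have Lmin_le: "Lmin \<le> length (\<tau> b)" for b
    unfolding Lmin_def by (rule Min_le) auto
  have Lmax_ge: "length (\<tau> b) \<le> Lmax" for b
    unfolding Lmax_def by (rule Max_ge) auto
  have Lminpos: "Lmin > 0" using Lpos by (simp add: Lmin_def \<tau>_eq)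
  define K where "K = Max ((\<lambda>(N,a). length (comp_dir sig N [a])) ` ({..<n} \<times> (UNIV::'a set)))"
  have K: "length (comp_dir sig N [a]) \<le> K" if "N < n" for N a
    unfolding K_def by (rule Max_ge) (use that in auto)
  obtain B where B: "\<forall>x. (\<forall>a. \<bar>(Mx *v x)$a\<bar> \<le> 4*Lmax*T) \<longrightarrow> (\<forall>b. \<bar>x$b\<bar> \<le> B)"
    using inv_bound[OF Mxinv] by blast
  define V where "V u = (SOME v. \<exists>s p. u = s @ concat (map \<tau> v) @ p \<and> length s \<le> Lmax \<and> length p \<le> Lmax)" for u
  define c where "c b = real (occ w (\<tau> b))" for b
  define C0 where "C0 = (\<Sum>b\<in>UNIV. c b * B) + T * (2*Lmax + 2*length w)"
  have main: "(real m - length w + 1) * (P w - Q w) \<le> C0 + (T * length w / Lmin) * real m"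
    if m: "m \<ge> max (Suc K) (length w)" for m
  proof -
    define W where "W = {u::'a list. length u = m}"
    define G where "G = {u\<in>W. \<exists>N a. sublist u (comp_dir sig N [a])}"
    have finW: "finite W" unfolding W_def by (rule finite_W)
    have GW: "G \<subseteq> W" unfolding G_def by auto
    have finG: "finite G" using finW GW finite_subset by blast
    have dec: "\<exists>s p. u = s @ concat (map \<tau> (V u)) @ p \<and> length s \<le> Lmax \<and> length p \<le> Lmax"
      if "u \<in> G" for u
    proof -
      from that obtain N a where u: "length u = m" "sublist u (comp_dir sig N [a])"
        unfolding G_def W_def by blast
      have "n \<le> N"
      proof (rule ccontr)
        assume "\<not> n \<le> N"
        then have "length (comp_dir sig N [a]) \<le> K" using K by simp
        moreover have "length u \<le> length (comp_dir sig N [a])" using u(2) sublist_length_le by blast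
        ultimately show False using u(1) m by simp
      qed
      then obtain v0 where "comp_dir sig N [a] = comp_dir sig n v0" using comp_dir_later by blast
      then have "sublist u (concat (map \<tau> v0))" using u(2) comp_dir_concat[of sig n v0]
        by (simp add: \<tau>_eq)
      then have "\<exists>v s p. u = s @ concat (map \<tau> v) @ p \<and> length s \<le> Lmax \<and> length p \<le> Lmax"
        using sublist_concat_dec[of \<tau> Lmax u v0] Lmax_ge by blast
      then have "\<exists>v. \<exists>s p. u = s @ concat (map \<tau> v) @ p \<and> length s \<le> Lmax \<and> length p \<le> Lmax"
        by blast
      then show ?thesis unfolding V_def by (rule someI_ex)
    qed
    have Pz: "P u = 0" if "u \<in> W - G" for u using that PL unfolding G_def by blast
    have Qz: "Q u = 0" if "u \<in> W - G" for u using that QL unfolding G_def by blast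
    have PG: "(\<Sum>u\<in>W. P u * f u) = (\<Sum>u\<in>G. P u * f u)" for f
      by (rule sum.mono_neutral_right[OF finW GW]) (simp add: Pz)
    have QG: "(\<Sum>u\<in>W. Q u * f u) = (\<Sum>u\<in>G. Q u * f u)" for f
      by (rule sum.mono_neutral_right[OF finW GW]) (simp add: Qz)
    have PT: "(\<Sum>u\<in>G. P u) = T" using PG[of "\<lambda>_. 1"] Ptot[of m] by (simp add: W_def)
    have QT: "(\<Sum>u\<in>G. Q u) = T" using QG[of "\<lambda>_. 1"] Qtot[of m] by (simp add: W_def)
    define k where "k u b = real (count_list (V u) b)" for u b
    have F1: "(\<Sum>b\<in>UNIV. k u b * c b) \<le> real (occ w u)" and
         F2: "real (occ w u) \<le> (\<Sum>b\<in>UNIV. k u b * c b) + real (length w) * real m / real Lmin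
                + 2*Lmax + 2*length w" and
         F4: "\<And>a. \<bar>real (count_list u a) - (\<Sum>b\<in>UNIV. k u b * Mx$a$b)\<bar> \<le> 2*Lmax"
      if uG: "u \<in> G" for u
    proof -
      obtain s p where sp: "u = s @ concat (map \<tau> (V u)) @ p" "length s \<le> Lmax" "length p \<le> Lmax"
        using dec[OF uG] by blast
      define C where "C = concat (map \<tau> (V u))"
      have Sdef: "sum_list (map (occ w) (map \<tau> (V u))) = (\<Sum>b\<in>UNIV. count_list (V u) b * occ w (\<tau> b))"
        using sum_list_count[of "\<lambda>b. occ w (\<tau> b)" "V u"] by (simp add: o_def)
      have Sreal: "real (\<Sum>b\<in>UNIV. count_list (V u) b * occ w (\<tau> b)) = (\<Sum>b\<in>UNIV. k u b * c b)"
        by (simp add: of_nat_sum k_def c_def)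
      have lenC: "length (V u) * Lmin \<le> length C"
        unfolding C_def by (rule length_concat_ge) (rule Lmin_le)
      have "length u = length (s @ C @ p)" using arg_cong[OF sp(1), of length] by (simp add: C_def)
      moreover have "length u = m" using uG by (simp add: G_def W_def)
      ultimately have "length C \<le> m" by simp
      then have lenV: "real (length (V u)) * real Lmin \<le> real m" using lenC
        by (metis le_trans of_nat_le_iff of_nat_mult)
      have lenV': "real (length (V u)) \<le> real m / real Lmin"
        using lenV Lminpos by (simp add: pos_le_divide_eq)
      have "occ w C \<le> occ w u"
      proof -
        have "occ w C \<le> occ w (C @ p)" using occ_append_ge[of w C p] by simp
        also have "\<dots> \<le> occ w (s @ C @ p)" using occ_append_ge[of w s "C @ p"] by simp
        finally show ?thesis using sp(1) C_def by simp
      qed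
      moreover have "sum_list (map (occ w) (map \<tau> (V u))) \<le> occ w C"
        unfolding C_def by (rule occ_concat_ge)
      ultimately show "(\<Sum>b\<in>UNIV. k u b * c b) \<le> real (occ w u)"
        using Sdef Sreal by (metis le_trans of_nat_le_iff)
      have "occ w u \<le> occ w s + occ w (C @ p) + length w"
        using occ_append_le[of w s "C @ p"] sp(1) C_def by simp
      also have "occ w (C @ p) \<le> occ w C + occ w p + length w"
        using occ_append_le[of w C p] by simp
      also have "occ w C \<le> sum_list (map (occ w) (map \<tau> (V u))) + length w * length (V u)"
        unfolding C_def using occ_concat_le[of w "map \<tau> (V u)"] by simp
      finally have "occ w u \<le> occ w s + (sum_list (map (occ w) (map \<tau> (V u))) + length w * length (V u)
                     + occ w p + length w) + length w" by simp
      moreover have "occ w s \<le> Lmax" "occ w p \<le> Lmax"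
        using occ_le_length[of w s] occ_le_length[of w p] sp by auto
      ultimately have "occ w u \<le> (\<Sum>b\<in>UNIV. count_list (V u) b * occ w (\<tau> b))
           + length w * length (V u) + 2*Lmax + 2*length w" using Sdef by linarith
      then have "real (occ w u) \<le> (\<Sum>b\<in>UNIV. k u b * c b) + real (length w) * real (length (V u))
           + 2*Lmax + 2*length w" using Sreal
        by (metis (mono_tags, lifting) of_nat_add of_nat_le_iff of_nat_mult of_nat_numeral)
      moreover have "real (length w) * real (length (V u)) \<le> real (length w) * real m / real Lmin"
        using lenV' by (metis mult_left_mono of_nat_0_le_iff times_divide_eq_right)
      ultimately show "real (occ w u) \<le> (\<Sum>b\<in>UNIV. k u b * c b) + real (length w) * real m / real Lmin
                + 2*Lmax + 2*length w" by linarith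
      fix a
      have cC: "count_list C a = (\<Sum>b\<in>UNIV. count_list (V u) b * count_list (\<tau> b) a)"
        unfolding C_def count_concat using sum_list_count[of "\<lambda>b. count_list (\<tau> b) a" "V u"]
        by (simp add: o_def)
      have cR: "real (\<Sum>b\<in>UNIV. count_list (V u) b * count_list (\<tau> b) a) = (\<Sum>b\<in>UNIV. k u b * Mx$a$b)"
        by (simp add: of_nat_sum k_def Mx_def incidence_def)
      have "count_list u a = count_list s a + count_list C a + count_list p a"
        using arg_cong[OF sp(1), of "\<lambda>x. count_list x a"] by (simp add: C_def)
      moreover have "count_list s a \<le> Lmax" "count_list p a \<le> Lmax"
        using count_le_length[of s a] count_le_length[of p a] sp by auto
      ultimately show "\<bar>real (count_list u a) - (\<Sum>b\<in>UNIV. k u b * Mx$a$b)\<bar> \<le> 2*Lmax"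
        using cC cR
      proof -
        have "real (count_list u a) = real (count_list s a) + real (count_list C a) + real (count_list p a)"
          using \<open>count_list u a = count_list s a + count_list C a + count_list p a\<close> by simp
        moreover have "real (count_list C a) = (\<Sum>b\<in>UNIV. k u b * Mx$a$b)" using cC cR by simp
        moreover have "real (count_list s a) \<le> real Lmax" "real (count_list p a) \<le> real Lmax"
          using \<open>count_list s a \<le> Lmax\<close> \<open>count_list p a \<le> Lmax\<close> by simp_all
        ultimately show ?thesis by simp
      qed
    qed
    define D where "D = (\<chi> b. \<Sum>u\<in>G. (P u - Q u) * k u b)"
    have Dbound: "\<bar>D$b\<bar> \<le> B" for b
    proof -
      have "\<bar>(Mx *v D)$a\<bar> \<le> 4*Lmax*T" for a
      proof -
        have cnt0: "(\<Sum>u\<in>G. (P u - Q u) * real (count_list u a)) = 0"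
        proof -
          have "(\<Sum>u\<in>G. P u * real (count_list u a)) = real m * P [a]"
            using Pocc[of "[a]" m] m PG[of "\<lambda>u. real (count_list u a)"] by (simp add: occ_single W_def)
          moreover have "(\<Sum>u\<in>G. Q u * real (count_list u a)) = real m * Q [a]"
            using Qocc[of "[a]" m] m QG[of "\<lambda>u. real (count_list u a)"] by (simp add: occ_single W_def)
          ultimately show ?thesis using agree[of a] by (simp add: left_diff_distrib sum_subtractf)
        qed
        have "(Mx *v D)$a = (\<Sum>b\<in>UNIV. Mx$a$b * (\<Sum>u\<in>G. (P u - Q u) * k u b))"
          by (simp add: matrix_vector_mult_def D_def)
        also have "\<dots> = (\<Sum>b\<in>UNIV. \<Sum>u\<in>G. (P u - Q u) * (k u b * Mx$a$b))"
          by (simp add: sum_distrib_left mult_ac)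
        also have "\<dots> = (\<Sum>u\<in>G. \<Sum>b\<in>UNIV. (P u - Q u) * (k u b * Mx$a$b))"
          by (rule sum.swap)
        also have "\<dots> = (\<Sum>u\<in>G. (P u - Q u) * (\<Sum>b\<in>UNIV. k u b * Mx$a$b))"
          by (simp add: sum_distrib_left)
        also have "\<dots> = (\<Sum>u\<in>G. (P u - Q u) * ((\<Sum>b\<in>UNIV. k u b * Mx$a$b) - real (count_list u a)))"
          using cnt0 by (simp add: right_diff_distrib sum_subtractf)
        finally have eq: "(Mx *v D)$a = \<dots>" .
        have "\<bar>(Mx *v D)$a\<bar> \<le> (\<Sum>u\<in>G. \<bar>(P u - Q u) * ((\<Sum>b\<in>UNIV. k u b * Mx$a$b) - real (count_list u a))\<bar>)"
          unfolding eq by (rule sum_abs)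
        also have "\<dots> \<le> (\<Sum>u\<in>G. (P u + Q u) * (2*Lmax))"
        proof (rule sum_mono)
          fix u assume uG: "u \<in> G"
          have "\<bar>P u - Q u\<bar> \<le> P u + Q u" using P0[of u] Q0[of u] by linarith
          moreover have "\<bar>(\<Sum>b\<in>UNIV. k u b * Mx$a$b) - real (count_list u a)\<bar> \<le> 2*Lmax"
            using F4[OF uG, of a] by linarith
          ultimately show "\<bar>(P u - Q u) * ((\<Sum>b\<in>UNIV. k u b * Mx$a$b) - real (count_list u a))\<bar>
                 \<le> (P u + Q u) * (2*Lmax)"
            unfolding abs_mult using P0[of u] Q0[of u] by (intro mult_mono) auto
        qed
        also have "\<dots> = 4*Lmax*T" using PT QT by (simp add: sum_distrib_right[symmetric] sum.distrib)
        finally show ?thesis .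
      qed
      then show ?thesis using B by blast
    qed
    define E where "E = real (length w) * real m / real Lmin + 2*Lmax + 2*length w"
    have "(real m - length w + 1) * (P w - Q w)
          = (\<Sum>u\<in>G. P u * real (occ w u)) - (\<Sum>u\<in>G. Q u * real (occ w u))"
      using Pocc[OF wne, of m] Qocc[OF wne, of m] m PG[of "\<lambda>u. real (occ w u)"]
        QG[of "\<lambda>u. real (occ w u)"] by (simp add: W_def right_diff_distrib)
    also have "\<dots> \<le> (\<Sum>u\<in>G. P u * ((\<Sum>b\<in>UNIV. k u b * c b) + E)) - (\<Sum>u\<in>G. Q u * (\<Sum>b\<in>UNIV. k u b * c b))"
    proof -
      have "(\<Sum>u\<in>G. P u * real (occ w u)) \<le> (\<Sum>u\<in>G. P u * ((\<Sum>b\<in>UNIV. k u b * c b) + E))"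
      proof (rule sum_mono)
        fix u assume uG: "u \<in> G"
        have "real (occ w u) \<le> (\<Sum>b\<in>UNIV. k u b * c b) + E" using F2[OF uG] unfolding E_def by linarith
        then show "P u * real (occ w u) \<le> P u * ((\<Sum>b\<in>UNIV. k u b * c b) + E)"
          using P0[of u] by (rule mult_left_mono)
      qed
      moreover have "(\<Sum>u\<in>G. Q u * (\<Sum>b\<in>UNIV. k u b * c b)) \<le> (\<Sum>u\<in>G. Q u * real (occ w u))"
      proof (rule sum_mono)
        fix u assume uG: "u \<in> G"
        show "Q u * (\<Sum>b\<in>UNIV. k u b * c b) \<le> Q u * real (occ w u)"
          using F1[OF uG] Q0[of u] by (rule mult_left_mono)
      qed
      ultimately show ?thesis by linarith
    qed
    also have "\<dots> = (\<Sum>b\<in>UNIV. c b * D$b) + T * E"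
    proof -
      have "(\<Sum>u\<in>G. P u * ((\<Sum>b\<in>UNIV. k u b * c b) + E)) = (\<Sum>u\<in>G. P u * (\<Sum>b\<in>UNIV. k u b * c b)) + T * E"
      proof -
        have "(\<Sum>u\<in>G. P u * ((\<Sum>b\<in>UNIV. k u b * c b) + E)) = (\<Sum>u\<in>G. P u * (\<Sum>b\<in>UNIV. k u b * c b)) + (\<Sum>u\<in>G. P u) * E"
          by (simp add: distrib_left sum.distrib sum_distrib_right)
        then show ?thesis using PT by simp
      qed
      moreover have "(\<Sum>u\<in>G. P u * (\<Sum>b\<in>UNIV. k u b * c b)) - (\<Sum>u\<in>G. Q u * (\<Sum>b\<in>UNIV. k u b * c b))
          = (\<Sum>b\<in>UNIV. c b * D$b)"
      proof -
        have "(\<Sum>u\<in>G. P u * (\<Sum>b\<in>UNIV. k u b * c b)) - (\<Sum>u\<in>G. Q u * (\<Sum>b\<in>UNIV. k u b * c b))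
            = (\<Sum>u\<in>G. (P u - Q u) * (\<Sum>b\<in>UNIV. k u b * c b))"
          by (simp add: sum_subtractf left_diff_distrib)
        also have "\<dots> = (\<Sum>u\<in>G. \<Sum>b\<in>UNIV. c b * ((P u - Q u) * k u b))"
          by (simp add: sum_distrib_left mult_ac)
        also have "\<dots> = (\<Sum>b\<in>UNIV. \<Sum>u\<in>G. c b * ((P u - Q u) * k u b))"
          by (rule sum.swap)
        also have "\<dots> = (\<Sum>b\<in>UNIV. c b * D$b)"
          by (simp add: D_def sum_distrib_left)
        finally show ?thesis .
      qed
      ultimately show ?thesis by linarith
    qed
    also have "\<dots> \<le> (\<Sum>b\<in>UNIV. c b * B) + T * E"
    proof -
      have "c b * D$b \<le> c b * B" for b
        using Dbound[of b] by (intro mult_left_mono) (auto simp: c_def)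
      then show ?thesis by (simp add: sum_mono)
    qed
    also have "\<dots> = C0 + (T * length w / Lmin) * real m"
    proof -
      have "T * E = T * (2*Lmax + 2*length w) + (T * length w / Lmin) * real m"
        unfolding E_def by (simp add: distrib_left)
      then show ?thesis unfolding C0_def by simp
    qed
    finally show ?thesis .
  qed
  have "P w - Q w \<le> T * length w / Lmin"
    by (rule archim_bound[of "max (Suc K) (length w)"]) (rule main)
  then show ?thesis by (simp add: Lmin_def \<tau>_eq)
qed

end



lemma core_eq:
  fixes sig :: "nat \<Rightarrow> 'a::finite \<Rightarrow> 'a list" and P Q :: "'a list \<Rightarrow> real" and T :: real
  assumes inv: "\<And>n. invertible (incidence (sig n))"
    and grow: "everywhere_growing sig"
    and P0: "\<And>u. P u \<ge> 0" and Q0: "\<And>u. Q u \<ge> 0"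
    and Pocc: "\<And>m w. w \<noteq> [] \<Longrightarrow> length w \<le> m \<Longrightarrow>
       (\<Sum>u\<in>{u. length u = m}. P u * real (occ w u)) = (real m - real (length w) + 1) * P w"
    and Qocc: "\<And>m w. w \<noteq> [] \<Longrightarrow> length w \<le> m \<Longrightarrow>
       (\<Sum>u\<in>{u. length u = m}. Q u * real (occ w u)) = (real m - real (length w) + 1) * Q w"
    and Ptot: "\<And>m. (\<Sum>u\<in>{u. length u = m}. P u) = T"
    and Qtot: "\<And>m. (\<Sum>u\<in>{u. length u = m}. Q u) = T"
    and PL: "\<And>u. P u \<noteq> 0 \<Longrightarrow> \<exists>N a. sublist u (comp_dir sig N [a])"
    and QL: "\<And>u. Q u \<noteq> 0 \<Longrightarrow> \<exists>N a. sublist u (comp_dir sig N [a])"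
    and agree: "\<And>a. P [a] = Q [a]"
  shows "P w = Q w"
proof (cases "w = []")
  case True
  have "{u::'a list. length u = 0} = {[]}" by auto
  then show ?thesis using Ptot[of 0] Qtot[of 0] True by simp
next
  case wne: False
  define L where "L n = Min (range (\<lambda>a. length (comp_dir sig n [a])))" for n
  have b1: "P w - Q w \<le> T * real (length w) / real (L n)" if "L n > 0" for n
    using half[of sig P Q T w n] inv P0 Q0 Pocc Qocc Ptot Qtot PL QL agree wne that
    unfolding L_def by blast
  have b2: "Q w - P w \<le> T * real (length w) / real (L n)" if "L n > 0" for n
    using half[of sig Q P T w n] inv P0 Q0 Pocc Qocc Ptot Qtot PL QL agree wne that
    unfolding L_def by (metis (no_types, lifting))
  have T0: "T \<ge> 0" using Ptot[of 0] P0 by (metis sum_nonneg)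
  show ?thesis
  proof (rule ccontr)
    assume "P w \<noteq> Q w"
    then have d: "\<bar>P w - Q w\<bar> > 0" by simp
    define Z where "Z = nat \<lceil>T * real (length w) / \<bar>P w - Q w\<bar>\<rceil> + 1"
    have "eventually (\<lambda>n. Z \<le> L n) sequentially"
      using grow unfolding everywhere_growing_def filterlim_at_top L_def by blast
    then obtain n where n: "Z \<le> L n" by (meson eventually_sequentially order_refl)
    have Lpos: "L n > 0" using n by (simp add: Z_def)
    have "T * real (length w) / \<bar>P w - Q w\<bar> < real Z" unfolding Z_def using real_nat_ceiling_ge[of "T * real (length w) / \<bar>P w - Q w\<bar>"] by simp
    also have "\<dots> \<le> real (L n)" using n by simp
    finally have "T * real (length w) < real (L n) * \<bar>P w - Q w\<bar>"
      using d by (simp add: divide_less_eq)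
    then have "T * real (length w) / real (L n) < \<bar>P w - Q w\<bar>"
      using Lpos by (simp add: divide_less_eq mult.commute)
    then show False using b1[OF Lpos] b2[OF Lpos] by linarith
  qed
qed



definition cyl :: "int \<Rightarrow> 'a list \<Rightarrow> (int \<Rightarrow> 'a) set" where
  "cyl j w = {x. \<forall>i<length w. x (j + int i) = w ! i}"

definition gcyl :: "int set \<Rightarrow> (int \<Rightarrow> 'a) \<Rightarrow> (int \<Rightarrow> 'a) set" where
  "gcyl F f = {x. \<forall>i\<in>F. x i = f i}"

lemma cylinder_cyl: "cylinder w = cyl 1 w"
  by (auto simp: cylinder_def cyl_def add.commute)

lemma cyl_Cons: "cyl j (a # w) = {x. x j = a} \<inter> cyl (j + 1) w"
proof -
  have "(\<forall>i<length (a#w). x (j + int i) = (a#w) ! i) \<longleftrightarrow> x j = a \<and> (\<forall>i<length w. x (j + 1 + int i) = w ! i)" for x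
  proof
    assume h: "\<forall>i<length (a#w). x (j + int i) = (a#w) ! i"
    show "x j = a \<and> (\<forall>i<length w. x (j + 1 + int i) = w ! i)"
    proof
      show "x j = a" using h[rule_format, of 0] by simp
      show "\<forall>i<length w. x (j + 1 + int i) = w ! i"
      proof (intro allI impI)
        fix i assume "i < length w"
        then show "x (j + 1 + int i) = w ! i" using h[rule_format, of "Suc i"] by (simp add: add.assoc)
      qed
    qed
  next
    assume h: "x j = a \<and> (\<forall>i<length w. x (j + 1 + int i) = w ! i)"
    show "\<forall>i<length (a#w). x (j + int i) = (a#w) ! i"
    proof (intro allI impI)
      fix i assume i: "i < length (a#w)"
      show "x (j + int i) = (a#w) ! i"
      proof (cases i)
        case 0 then show ?thesis using h by simp
      next
        case (Suc k) then show ?thesis using h i by (simp add: add.assoc)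
      qed
    qed
  qed
  then show ?thesis by (auto simp: cyl_def)
qed

lemma prefix_nth_iff: "prefix w v \<longleftrightarrow> length w \<le> length v \<and> (\<forall>t<length w. v!t = w!t)"
proof
  assume "prefix w v"
  then obtain zs where "v = w @ zs" by (auto simp: prefix_def)
  then show "length w \<le> length v \<and> (\<forall>t<length w. v!t = w!t)" by (simp add: nth_append)
next
  assume h: "length w \<le> length v \<and> (\<forall>t<length w. v!t = w!t)"
  then have "take (length w) v = w" by (intro nth_equalityI) auto
  then show "prefix w v" by (metis take_is_prefix)
qed

lemma space_fullshift: "space (fullshift_borel :: (int \<Rightarrow> 'a) measure) = UNIV"
proof -
  have "{S. openin (fullshift_top :: (int \<Rightarrow> 'a) topology) S} \<subseteq> Pow (topspace fullshift_top)"
    using openin_subset by blast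
  then have "space (fullshift_borel :: (int \<Rightarrow> 'a) measure) = topspace (fullshift_top :: (int \<Rightarrow> 'a) topology)"
    unfolding fullshift_borel_def by (rule space_measure_of)
  also have "\<dots> = UNIV" by (simp add: fullshift_top_def PiE_UNIV_domain)
  finally show ?thesis .
qed

lemma sets_fullshift: "sets (fullshift_borel :: (int \<Rightarrow> 'a) measure) = sigma_sets UNIV {S. openin fullshift_top S}"
proof -
  have "{S. openin (fullshift_top :: (int \<Rightarrow> 'a) topology) S} \<subseteq> Pow (topspace fullshift_top)"
    using openin_subset by blast
  then have "sets (fullshift_borel :: (int \<Rightarrow> 'a) measure) = sigma_sets (topspace fullshift_top) {S. openin fullshift_top S}"
    unfolding fullshift_borel_def by (rule sets_measure_of)
  moreover have "topspace (fullshift_top :: (int \<Rightarrow> 'a) topology) = UNIV"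
    by (simp add: fullshift_top_def PiE_UNIV_domain)
  ultimately show ?thesis by simp
qed

lemma open_coord: "openin fullshift_top {x :: int \<Rightarrow> 'a. x i = c}"
proof -
  have "openin fullshift_top {x \<in> topspace fullshift_top. x i \<in> {c}}"
    unfolding fullshift_top_def
    by (rule openin_continuous_map_preimage[OF continuous_map_product_projection]) auto
  moreover have "topspace (fullshift_top :: (int \<Rightarrow> 'a) topology) = UNIV"
    by (simp add: fullshift_top_def PiE_UNIV_domain)
  ultimately show ?thesis by simp
qed

lemma coord_sets: "{x :: int \<Rightarrow> 'a. x i = c} \<in> sets fullshift_borel"
  unfolding sets_fullshift by (intro sigma_sets.Basic) (simp add: open_coord)

lemma cyl_sets: "cyl j w \<in> sets (fullshift_borel :: (int \<Rightarrow> 'a) measure)"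
proof (induction w arbitrary: j)
  case Nil
  have "cyl j [] = (UNIV :: (int \<Rightarrow> 'a) set)" by (simp add: cyl_def)
  then show ?case by (metis sets.top space_fullshift)
next
  case (Cons a w)
  then show ?case unfolding cyl_Cons by (intro sets.Int coord_sets) auto
qed

lemma gcyl_sets:
  assumes "finite F"
  shows "gcyl F f \<in> sets (fullshift_borel :: (int \<Rightarrow> 'a) measure)"
  using assms
proof (induction F rule: finite_induct)
  case empty
  have "gcyl {} f = (UNIV :: (int \<Rightarrow> 'a) set)" by (simp add: gcyl_def)
  then show ?case by (metis sets.top space_fullshift)
next
  case (insert a F)
  have "gcyl (insert a F) f = {x. x a = f a} \<inter> gcyl F f" by (auto simp: gcyl_def)
  then show ?case using insert by (auto intro: sets.Int coord_sets)
qed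

lemma cyl_disjoint:
  assumes "length u = m" "length v = m" "u \<noteq> v"
  shows "cyl j u \<inter> cyl j v = {}"
proof -
  obtain i where "i < m" "u ! i \<noteq> v ! i" using assms nth_equalityI by metis
  then show ?thesis using assms by (auto simp: cyl_def)
qed

lemma cyl_cover: "x \<in> cyl j (map (\<lambda>i. x (j + int i)) [0..<m])"
  by (simp add: cyl_def)

context
  fixes M :: "(int \<Rightarrow> 'a::finite) measure" and X
  assumes IM: "invariant_measure_on X M"
begin

lemma M_sets: "sets M = sets fullshift_borel"
  using IM by (simp add: invariant_measure_on_def)

lemma M_space: "space M = UNIV"
  using sets_eq_imp_space_eq[OF M_sets] space_fullshift by simp

lemma M_fin: "finite_measure M"
  using IM by (simp add: invariant_measure_on_def)

lemma M_cyl_sets: "cyl j w \<in> sets M"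
  using M_sets cyl_sets by blast

lemma shift_cyl: "shift -` cyl j w = cyl (j + 1) w"
  by (auto simp: shift_def cyl_def algebra_simps)

lemma M_cyl_shift: "measure M (cyl j w) = measure M (cylinder w)"
proof -
  have step: "measure M (cyl (j + 1) w) = measure M (cyl j w)" for j
  proof -
    have "emeasure M (shift -` cyl j w \<inter> space M) = emeasure M (cyl j w)"
      using IM M_cyl_sets unfolding invariant_measure_on_def by blast
    then show ?thesis by (simp add: shift_cyl M_space measure_def)
  qed
  have "measure M (cyl j w) = measure M (cyl 1 w)"
  proof (induction j rule: int_induct[where k=1])
    case base then show ?case by simp
  next
    case (step1 i) then show ?case using step[of i] by simp
  next
    case (step2 i) then show ?case using step[of "i - 1"] by simp
  qed
  then show ?thesis by (simp add: cylinder_cyl)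
qed

lemma M_partition:
  assumes A: "A \<in> sets M"
  shows "(\<Sum>u\<in>{u. length u = m}. measure M (cyl j u \<inter> A)) = measure M A"
proof -
  interpret finite_measure M by (rule M_fin)
  have "A = (\<Union>u\<in>{u. length u = m}. cyl j u \<inter> A)"
  proof
    show "A \<subseteq> (\<Union>u\<in>{u. length u = m}. cyl j u \<inter> A)"
    proof
      fix x assume "x \<in> A"
      then show "x \<in> (\<Union>u\<in>{u. length u = m}. cyl j u \<inter> A)"
        using cyl_cover[of x j m] by (intro UN_I[of "map (\<lambda>i. x (j + int i)) [0..<m]"]) auto
    qed
  qed auto
  moreover have "measure M (\<Union>u\<in>{u::'a list. length u = m}. cyl j u \<inter> A)
     = (\<Sum>u\<in>{u. length u = m}. measure M (cyl j u \<inter> A))"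
  proof (rule measure_finite_Union)
    show "finite {u::'a list. length u = m}" by (rule finite_W)
    show "(\<lambda>u. cyl j u \<inter> A) ` {u. length u = m} \<subseteq> sets M" using A M_cyl_sets by auto
    show "disjoint_family_on (\<lambda>u. cyl j u \<inter> A) {u. length u = m}"
      unfolding disjoint_family_on_def using cyl_disjoint by blast
    show "emeasure M (cyl j u \<inter> A) \<noteq> \<infinity>" for u by simp
  qed
  ultimately show ?thesis by simp
qed

lemma M_tot: "(\<Sum>u\<in>{u. length u = m}. measure M (cylinder u)) = measure M UNIV"
proof -
  have "UNIV \<in> sets M" using sets.top[of M] M_space by simp
  then show ?thesis using M_partition[where A=UNIV and m=m and j=1] by (simp add: cylinder_cyl)
qed

lemma M_occ:
  assumes wne: "w \<noteq> []" and wm: "length w \<le> m"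
  shows "(\<Sum>u\<in>{u. length u = m}. measure M (cylinder u) * real (occ w u))
       = (real m - real (length w) + 1) * measure M (cylinder w)"
proof -
  define W where "W = {u::'a list. length u = m}"
  have inner: "(\<Sum>u\<in>W. if prefix w (drop i u) then measure M (cylinder u) else 0)
      = (if i + length w \<le> m then measure M (cylinder w) else 0)" if im: "i < m" for i
  proof (cases "i + length w \<le> m")
    case True
    have eq: "cyl 1 u \<inter> cyl (1 + int i) w = (if prefix w (drop i u) then cyl 1 u else {})" if "u \<in> W" for u
    proof -
      have lu: "length u = m" using that by (simp add: W_def)
      have pre: "prefix w (drop i u) \<longleftrightarrow> (\<forall>t<length w. u ! (i + t) = w ! t)"
      proof -
        have "length w \<le> length (drop i u)" using True lu by simp
        then show ?thesis by (simp add: prefix_nth_iff)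
      qed
      have "x \<in> cyl (1 + int i) w \<longleftrightarrow> (\<forall>t<length w. u ! (i + t) = w ! t)" if "x \<in> cyl 1 u" for x
      proof -
        have "x (1 + int i + int t) = u ! (i + t)" if "t < length w" for t
        proof -
          have "i + t < length u" using True lu that by simp
          then have "x (1 + int (i + t)) = u ! (i + t)" using \<open>x \<in> cyl 1 u\<close> unfolding cyl_def by blast
          then show ?thesis by (simp add: add.assoc)
        qed
        then show ?thesis unfolding cyl_def by auto
      qed
      then show ?thesis using pre by auto
    qed
    have "(\<Sum>u\<in>W. if prefix w (drop i u) then measure M (cylinder u) else 0)
        = (\<Sum>u\<in>W. measure M (cyl 1 u \<inter> cyl (1 + int i) w))"
      by (rule sum.cong) (auto simp: eq cylinder_cyl)
    also have "\<dots> = measure M (cyl (1 + int i) w)"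
      unfolding W_def by (rule M_partition) (rule M_cyl_sets)
    also have "\<dots> = measure M (cylinder w)" by (rule M_cyl_shift)
    finally show ?thesis using True by simp
  next
    case False
    have "\<not> prefix w (drop i u)" if "u \<in> W" for u
      using False that im by (auto simp: W_def prefix_nth_iff)
    then show ?thesis using False by simp
  qed
  have "(\<Sum>u\<in>W. measure M (cylinder u) * real (occ w u))
      = (\<Sum>u\<in>W. \<Sum>i<m. if prefix w (drop i u) then measure M (cylinder u) else 0)"
    unfolding W_def by (rule sum.cong) (auto simp: occ_sum sum_distrib_left of_nat_sum intro!: sum.cong)
  also have "\<dots> = (\<Sum>i<m. \<Sum>u\<in>W. if prefix w (drop i u) then measure M (cylinder u) else 0)"
    by (rule sum.swap)
  also have "\<dots> = (\<Sum>i<m. if i + length w \<le> m then measure M (cylinder w) else 0)"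
    by (rule sum.cong) (auto simp: inner)
  also have "\<dots> = real (card {i. i < m \<and> i + length w \<le> m}) * measure M (cylinder w)"
    by (simp add: sum.If_cases Int_def)
  also have "{i. i < m \<and> i + length w \<le> m} = {..m - length w}"
    using wne wm by (cases w) auto
  finally show ?thesis using wm unfolding W_def by (simp add: of_nat_diff)
qed

end



lemma factor_at_cyl: "x \<in> cyl i u \<and> length u = k \<longleftrightarrow> factor_at x i k = u"
proof
  assume h: "x \<in> cyl i u \<and> length u = k"
  show "factor_at x i k = u"
    using h by (intro nth_equalityI) (auto simp: factor_at_def cyl_def)
next
  assume "factor_at x i k = u"
  then show "x \<in> cyl i u \<and> length u = k" by (auto simp: factor_at_def cyl_def)
qed

lemma gen_sub_eq: "generated_subshift sig =
  (\<Inter>p\<in>(UNIV::(int \<times> nat) set). \<Union>u\<in>{u. length u = snd p \<and> (\<exists>n a. sublist u (comp_dir sig n [a]))}. cyl (fst p) u)"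
proof -
  have eq: "(\<exists>n a. sublist (factor_at x i k) (comp_dir sig n [a])) \<longleftrightarrow>
        x \<in> (\<Union>u\<in>{u. length u = k \<and> (\<exists>n a. sublist u (comp_dir sig n [a]))}. cyl i u)" for x i k
  proof
    assume h: "\<exists>n a. sublist (factor_at x i k) (comp_dir sig n [a])"
    have "x \<in> cyl i (factor_at x i k) \<and> length (factor_at x i k) = k"
      using factor_at_cyl[of x i "factor_at x i k" k] by simp
    then show "x \<in> (\<Union>u\<in>{u. length u = k \<and> (\<exists>n a. sublist u (comp_dir sig n [a]))}. cyl i u)"
      using h by blast
  next
    assume "x \<in> (\<Union>u\<in>{u. length u = k \<and> (\<exists>n a. sublist u (comp_dir sig n [a]))}. cyl i u)"
    then obtain u where u: "length u = k" "\<exists>n a. sublist u (comp_dir sig n [a])" "x \<in> cyl i u" by blast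
    then have "factor_at x i k = u" using factor_at_cyl[of x i u k] by simp
    then show "\<exists>n a. sublist (factor_at x i k) (comp_dir sig n [a])" using u(2) by simp
  qed
  show ?thesis
  proof (rule set_eqI)
    fix x
    show "x \<in> generated_subshift sig \<longleftrightarrow> x \<in> (\<Inter>p\<in>(UNIV::(int \<times> nat) set). \<Union>u\<in>{u. length u = snd p \<and> (\<exists>n a. sublist u (comp_dir sig n [a]))}. cyl (fst p) u)"
      unfolding generated_subshift_def using eq by simp
  qed
qed

lemma gen_sub_sets: "generated_subshift sig \<in> sets (fullshift_borel :: (int \<Rightarrow> 'a::finite) measure)"
  unfolding gen_sub_eq
proof (rule sets.countable_INT)
  show "(\<lambda>p. \<Union>u\<in>{u. length u = snd p \<and> (\<exists>n a. sublist u (comp_dir sig n [a]))}. cyl (fst p) u) ` UNIV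
     \<subseteq> sets fullshift_borel"
  proof (rule image_subsetI)
    fix p :: "int \<times> nat"
    show "(\<Union>u\<in>{u. length u = snd p \<and> (\<exists>n a. sublist u (comp_dir sig n [a]))}. cyl (fst p) u) \<in> sets fullshift_borel"
      by (rule sets.countable_UN) (rule image_subsetI, rule cyl_sets)
  qed
qed simp

lemma cyl_gcyl: "cyl j u = gcyl ((\<lambda>i. j + int i) ` {..<length u}) (\<lambda>k. u ! nat (k - j))"
proof (rule set_eqI)
  fix x :: "int \<Rightarrow> 'a"
  show "x \<in> cyl j u \<longleftrightarrow> x \<in> gcyl ((\<lambda>i. j + int i) ` {..<length u}) (\<lambda>k. u ! nat (k - j))"
  proof
    assume "x \<in> cyl j u"
    then have h: "\<forall>i<length u. x (j + int i) = u ! i" by (simp add: cyl_def)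
    show "x \<in> gcyl ((\<lambda>i. j + int i) ` {..<length u}) (\<lambda>k. u ! nat (k - j))"
      unfolding gcyl_def using h by auto
  next
    assume "x \<in> gcyl ((\<lambda>i. j + int i) ` {..<length u}) (\<lambda>k. u ! nat (k - j))"
    then have h: "\<forall>k\<in>(\<lambda>i. j + int i) ` {..<length u}. x k = u ! nat (k - j)" by (simp add: gcyl_def)
    show "x \<in> cyl j u" unfolding cyl_def
    proof (intro CollectI allI impI)
      fix i assume "i < length u"
      then have "j + int i \<in> (\<lambda>i. j + int i) ` {..<length u}" by blast
      then show "x (j + int i) = u ! i" using h by fastforce
    qed
  qed
qed

lemma finite_bound: "finite F \<Longrightarrow> i \<in> F \<Longrightarrow> \<bar>i\<bar> \<le> int (\<Sum>k\<in>F. nat \<bar>k\<bar>)"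
  using member_le_sum[of i F "\<lambda>k. nat \<bar>k\<bar>"] by linarith

lemma gcyl_cyl_Int:
  fixes F :: "int set"
  assumes F: "finite F" and N: "N = (\<Sum>k\<in>F. nat \<bar>k\<bar>)" and lu: "length u = 2*N+1"
  shows "cyl (- int N) u \<inter> gcyl F f = (if (\<forall>i\<in>F. u ! nat (i + int N) = f i) then cyl (- int N) u else {})"
proof -
  have key: "x (i) = u ! nat (i + int N)" if "x \<in> cyl (- int N) u" "i \<in> F" for x i
  proof -
    have "\<bar>i\<bar> \<le> int N" using finite_bound[OF F that(2)] N by simp
    then have "nat (i + int N) < length u" using lu by simp
    then have "x (- int N + int (nat (i + int N))) = u ! nat (i + int N)"
      using that(1) unfolding cyl_def by blast
    moreover have "- int N + int (nat (i + int N)) = i" using \<open>\<bar>i\<bar> \<le> int N\<close> by simp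
    ultimately show ?thesis by simp
  qed
  show ?thesis
  proof (cases "\<forall>i\<in>F. u ! nat (i + int N) = f i")
    case True then show ?thesis using key by (auto simp: gcyl_def)
  next
    case False
    then obtain i where "i \<in> F" "u ! nat (i + int N) \<noteq> f i" by blast
    then show ?thesis using key by (auto simp: gcyl_def)
  qed
qed

lemma open_cover:
  assumes S: "openin (fullshift_top :: (int \<Rightarrow> 'a) topology) S" and xS: "x \<in> S"
  shows "\<exists>j u. x \<in> cyl j u \<and> cyl j u \<subseteq> S"
proof -
  obtain U where U: "finite {i. U i \<noteq> UNIV}" "x \<in> Pi\<^sub>E UNIV U" "Pi\<^sub>E UNIV U \<subseteq> S"
    using S xS unfolding fullshift_top_def openin_product_topology_alt by auto
  define F where "F = {i. U i \<noteq> UNIV}"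
  define N where "N = (\<Sum>k\<in>F. nat \<bar>k\<bar>)"
  define u where "u = map (\<lambda>t. x (- int N + int t)) [0..<2*N+1]"
  have "x \<in> cyl (- int N) u" unfolding u_def cyl_def by (auto simp del: upt_Suc)
  moreover have "cyl (- int N) u \<subseteq> Pi\<^sub>E UNIV U"
  proof
    fix y assume y: "y \<in> cyl (- int N) u"
    have "y i \<in> U i" for i
    proof (cases "i \<in> F")
      case False then show ?thesis by (simp add: F_def)
    next
      case True
      have "\<bar>i\<bar> \<le> int N" using finite_bound[OF _ True] U(1) by (simp add: F_def N_def)
      then have lt: "nat (i + int N) < 2*N+1" by simp
      have eqi: "- int N + int (nat (i + int N)) = i" using \<open>\<bar>i\<bar> \<le> int N\<close> by simp
      have lenu: "length u = 2*N+1" by (simp add: u_def)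
      have yy: "\<forall>t<length u. y (- int N + int t) = u ! t" using y by (simp add: cyl_def)
      have lt2: "nat (i + int N) < length u" using lt lenu by simp
      have "y (- int N + int (nat (i + int N))) = u ! nat (i + int N)"
        using yy[rule_format, OF lt2] .
      also have "u ! nat (i + int N) = x (- int N + int (nat (i + int N)))"
        unfolding u_def using lt by (simp only: nth_map_upt) simp
      finally have "y i = x i" unfolding eqi .
      moreover have "x i \<in> U i" using U(2) by (auto simp: PiE_UNIV_domain)
      ultimately show ?thesis by simp
    qed
    then show "y \<in> Pi\<^sub>E UNIV U" by (simp add: PiE_UNIV_domain)
  qed
  ultimately show ?thesis using U(3) by blast
qed


definition Egen :: "(int \<Rightarrow> 'a) set set" where
  "Egen = insert {} {gcyl F f | F f. finite F}"

lemma Egen_Int_stable: "Int_stable Egen"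
  unfolding Int_stable_def
proof (intro ballI)
  fix a b :: "(int \<Rightarrow> 'a) set" assume a: "a \<in> Egen" and b: "b \<in> Egen"
  show "a \<inter> b \<in> Egen"
  proof (cases "a = {} \<or> b = {}")
    case True then show ?thesis by (auto simp: Egen_def)
  next
    case False
    then obtain F f G g where ab: "a = gcyl F f" "b = gcyl G g" "finite F" "finite G"
      using a b by (auto simp: Egen_def)
    show ?thesis
    proof (cases "\<forall>i\<in>F \<inter> G. f i = g i")
      case True
      define h where "h i = (if i \<in> F then f i else g i)" for i
      have "a \<inter> b = gcyl (F \<union> G) h" using True unfolding ab gcyl_def h_def by auto
      then show ?thesis using ab by (auto simp: Egen_def)
    next
      case False
      then have "a \<inter> b = {}" unfolding ab gcyl_def by auto
      then show ?thesis by (simp add: Egen_def)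
    qed
  qed
qed

lemma sets_Egen: "sets (fullshift_borel :: (int \<Rightarrow> 'a::finite) measure) = sigma_sets UNIV Egen"
proof
  have "Egen \<subseteq> sets (fullshift_borel :: (int \<Rightarrow> 'a) measure)"
    unfolding Egen_def using gcyl_sets by auto
  then show "sigma_sets UNIV Egen \<subseteq> sets (fullshift_borel :: (int \<Rightarrow> 'a) measure)"
  proof -
    have "sigma_sets (space (fullshift_borel :: (int \<Rightarrow> 'a) measure)) Egen \<subseteq> sets (fullshift_borel :: (int \<Rightarrow> 'a) measure)"
      by (rule sets.sigma_sets_subset) fact
    then show ?thesis unfolding space_fullshift .
  qed
next
  interpret S: sigma_algebra "UNIV :: (int \<Rightarrow> 'a) set" "sigma_sets UNIV Egen"
    by (rule sigma_algebra_sigma_sets) auto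
  have "{S. openin (fullshift_top :: (int \<Rightarrow> 'a) topology) S} \<subseteq> sigma_sets UNIV Egen"
  proof
    fix S assume "S \<in> {S. openin (fullshift_top :: (int \<Rightarrow> 'a) topology) S}"
    then have S: "openin fullshift_top S" by simp
    define CY where "CY = (\<lambda>(j, u). cyl j u) ` (UNIV :: (int \<times> 'a list) set)"
    have "S = \<Union>{e \<in> CY. e \<subseteq> S}"
    proof
      show "S \<subseteq> \<Union>{e \<in> CY. e \<subseteq> S}"
      proof
        fix x assume "x \<in> S"
        then obtain j u where "x \<in> cyl j u" "cyl j u \<subseteq> S" using open_cover[OF S] by blast
        then show "x \<in> \<Union>{e \<in> CY. e \<subseteq> S}" unfolding CY_def by blast
      qed
    qed auto
    moreover have "\<Union>{e \<in> CY. e \<subseteq> S} \<in> sigma_sets UNIV Egen"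
    proof (rule S.countable_Union)
      have "countable CY" unfolding CY_def by (rule countable_image) (rule countableI_type)
      then show "countable {e \<in> CY. e \<subseteq> S}" by (rule countable_subset[rotated]) blast
      show "{e \<in> CY. e \<subseteq> S} \<subseteq> sigma_sets UNIV Egen"
      proof
        fix e assume "e \<in> {e \<in> CY. e \<subseteq> S}"
        then obtain p where "e = (\<lambda>(j, u). cyl j u) p" unfolding CY_def by blast
        then obtain j u where "e = cyl j u" by (cases p) simp
        then have "e \<in> Egen" unfolding Egen_def cyl_gcyl by blast
        then show "e \<in> sigma_sets UNIV Egen" by (rule sigma_sets.Basic)
      qed
    qed
    ultimately show "S \<in> sigma_sets UNIV Egen" by simp
  qed
  then show "sets (fullshift_borel :: (int \<Rightarrow> 'a) measure) \<subseteq> sigma_sets UNIV Egen"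
    unfolding sets_fullshift by (rule S.sigma_sets_subset)
qed

context
  fixes M :: "(int \<Rightarrow> 'a::finite) measure" and X
  assumes IM: "invariant_measure_on X M"
begin

lemma M_gcyl:
  assumes F: "finite F"
  shows "measure M (gcyl F f) = (\<Sum>u\<in>{u. length u = 2*(\<Sum>k\<in>F. nat \<bar>k\<bar>)+1}.
     if (\<forall>i\<in>F. u ! nat (i + int (\<Sum>k\<in>F. nat \<bar>k\<bar>)) = f i) then measure M (cylinder u) else 0)"
proof -
  define N where "N = (\<Sum>k\<in>F. nat \<bar>k\<bar>)"
  have "gcyl F f \<in> sets M" using M_sets[OF IM] gcyl_sets[OF F] by blast
  then have "measure M (gcyl F f) = (\<Sum>u\<in>{u. length u = 2*N+1}. measure M (cyl (- int N) u \<inter> gcyl F f))"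
    using M_partition[OF IM] by simp
  also have "\<dots> = (\<Sum>u\<in>{u. length u = 2*N+1}.
     if (\<forall>i\<in>F. u ! nat (i + int N) = f i) then measure M (cylinder u) else 0)"
    by (rule sum.cong) (auto simp: gcyl_cyl_Int[OF F N_def] M_cyl_shift[OF IM])
  finally show ?thesis by (simp add: N_def)
qed

lemma M_lang:
  assumes X: "X = generated_subshift sig"
  assumes nz: "measure M (cylinder u) \<noteq> 0"
  shows "\<exists>N a. sublist u (comp_dir sig N [a])"
proof (rule ccontr)
  assume nl: "\<not> (\<exists>N a. sublist u (comp_dir sig N [a]))"
  have "cylinder u \<subseteq> space M - X"
  proof
    fix x assume x: "x \<in> cylinder u"
    have "x \<notin> X"
    proof
      assume "x \<in> X"
      then have "\<exists>n a. sublist (factor_at x 1 (length u)) (comp_dir sig n [a])"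
        unfolding X generated_subshift_def by blast
      moreover have "factor_at x 1 (length u) = u"
        using x factor_at_cyl[of x 1 u "length u"] by (simp add: cylinder_cyl)
      ultimately show False using nl by simp
    qed
    then show "x \<in> space M - X" by (simp add: M_space[OF IM])
  qed
  moreover have "space M - X \<in> sets M"
  proof -
    have "X \<in> sets M" using M_sets[OF IM] gen_sub_sets[of sig] X by simp
    then show ?thesis by (rule sets.Diff[OF sets.top])
  qed
  ultimately have "emeasure M (cylinder u) \<le> emeasure M (space M - X)" by (rule emeasure_mono)
  then have "emeasure M (cylinder u) = 0" using IM by (simp add: invariant_measure_on_def)
  then show False using nz by (simp add: measure_def)
qed

end

lemma W1_eq: "{u :: 'a list. length u = 1} = (\<lambda>a. [a]) ` UNIV"
  by (auto simp: length_Suc_conv)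

theorem corollary2:
  fixes sig :: "nat \<Rightarrow> 'a::finite \<Rightarrow> 'a list"
    and M N :: "(int \<Rightarrow> 'a) measure"
  assumes inv: "\<And>n. invertible (incidence (sig n))"
    and grow: "everywhere_growing sig"
    and M: "invariant_measure_on (generated_subshift sig) M"
    and N: "invariant_measure_on (generated_subshift sig) N"
    and agree: "\<And>a. emeasure M (cylinder [a]) = emeasure N (cylinder [a])"
  shows "M = N"
proof -
  define P where "P u = measure M (cylinder u)" for u
  define Q where "Q u = measure N (cylinder u)" for u
  have agr: "P [a] = Q [a]" for a using agree[of a] by (simp add: P_def Q_def measure_def)
  have TT: "measure M UNIV = measure N UNIV"
  proof -
    have "measure M UNIV = (\<Sum>u\<in>{u. length u = 1}. P u)" using M_tot[OF M, of 1] by (simp add: P_def)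
    also have "\<dots> = (\<Sum>a\<in>UNIV. P [a])" unfolding W1_eq by (subst sum.reindex) (auto simp: inj_on_def)
    also have "\<dots> = (\<Sum>a\<in>UNIV. Q [a])" using agr by simp
    also have "\<dots> = (\<Sum>u\<in>{u. length u = 1}. Q u)" unfolding W1_eq by (subst sum.reindex) (auto simp: inj_on_def)
    also have "\<dots> = measure N UNIV" using M_tot[OF N, of 1] by (simp add: Q_def)
    finally show ?thesis .
  qed
  have PQ: "P w = Q w" for w
  proof (rule core_eq[of sig P Q "measure M UNIV" w])
    show "\<And>n. invertible (incidence (sig n))" by (rule inv)
    show "everywhere_growing sig" by (rule grow)
    show "\<And>u. P u \<ge> 0" by (simp add: P_def)
    show "\<And>u. Q u \<ge> 0" by (simp add: Q_def)
    show "\<And>m w. w \<noteq> [] \<Longrightarrow> length w \<le> m \<Longrightarrow>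
       (\<Sum>u\<in>{u. length u = m}. P u * real (occ w u)) = (real m - real (length w) + 1) * P w"
      unfolding P_def by (rule M_occ[OF M])
    show "\<And>m w. w \<noteq> [] \<Longrightarrow> length w \<le> m \<Longrightarrow>
       (\<Sum>u\<in>{u. length u = m}. Q u * real (occ w u)) = (real m - real (length w) + 1) * Q w"
      unfolding Q_def by (rule M_occ[OF N])
    show "\<And>m. (\<Sum>u\<in>{u. length u = m}. P u) = measure M UNIV"
      unfolding P_def by (rule M_tot[OF M])
    show "\<And>m. (\<Sum>u\<in>{u. length u = m}. Q u) = measure M UNIV"
      unfolding Q_def TT by (rule M_tot[OF N])
    show "\<And>u. P u \<noteq> 0 \<Longrightarrow> \<exists>N a. sublist u (comp_dir sig N [a])"
      unfolding P_def by (rule M_lang[OF M refl])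
    show "\<And>u. Q u \<noteq> 0 \<Longrightarrow> \<exists>N a. sublist u (comp_dir sig N [a])"
      unfolding Q_def by (rule M_lang[OF N refl])
    show "\<And>a. P [a] = Q [a]" by (rule agr)
  qed
  interpret FM: finite_measure M using M_fin[OF M] .
  interpret FN: finite_measure N using M_fin[OF N] .
  show ?thesis
  proof (rule measure_eqI_generator_eq[OF Egen_Int_stable, of UNIV _ _ "\<lambda>_. UNIV"])
    show "Egen \<subseteq> Pow UNIV" by simp
    show "sets M = sigma_sets UNIV Egen" using M_sets[OF M] sets_Egen by simp
    show "sets N = sigma_sets UNIV Egen" using M_sets[OF N] sets_Egen by simp
    have "gcyl {} (\<lambda>_. undefined) = UNIV" by (simp add: gcyl_def)
    then show "range (\<lambda>_. UNIV) \<subseteq> Egen" unfolding Egen_def by blast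
    show "(\<Union>i::nat. UNIV) = UNIV" by simp
    show "emeasure M UNIV \<noteq> \<infinity>" for i :: nat by simp
    fix A :: "(int \<Rightarrow> 'a) set" assume "A \<in> Egen"
    then show "emeasure M A = emeasure N A"
    proof (cases "A = {}")
      case False
      with \<open>A \<in> Egen\<close> obtain F f where A: "A = gcyl F f" "finite F" by (auto simp: Egen_def)
      have "measure M A = measure N A"
      proof -
        have PQ': "measure M (cylinder w) = measure N (cylinder w)" for w using PQ[of w] by (simp add: P_def Q_def)
        show ?thesis unfolding A(1) M_gcyl[OF M A(2)] M_gcyl[OF N A(2)] PQ' ..
      qed
      then show ?thesis by (simp add: FM.emeasure_eq_measure FN.emeasure_eq_measure)
    qed simp
  qed
qed


end
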